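(* Let $q\ge5$ be a prime power and let $\mathcal{C}_\mathscr{C}$ be the $[q+1,q-3,5]_q$ code with parity check matrix whose columns are the vectors $(1,t,t^2,t^3)$, $t\in\mathbb{F}_q$, and $(0,0,0,1)$. Let $W\in\{2,3\}$ and let $\mathcal{V}^{(W)}_a,\mathcal{V}^{(W)}_b$ be two weight-$W$ cosets of $\mathcal{C}_\mathscr{C}$ with distinct weight distributions. Then for $4\le w\le q+1$, $$B_{w}(\mathcal{V}^{(W)}_a)-B_w(\mathcal{V}^{(W)}_b)=-(-1)^w\left[B_3(\mathcal{V}^{(W)}_a)-B_3(\mathcal{V}^{(W)}_b)\right]\binom{q-2}{w-3}.$$
   Context: A coset of a linear code $\mathcal{C}\subseteq\mathbb{F}_q^n$ is a set $\mathbf{v}+\mathcal{C}$; its weight is the minimum Hamming weight of its vectors. $B_w(\mathcal{V})$ is the number of vectors of Hamming weight $w$ in the coset $\mathcal{V}$; the weight distribution of $\mathcal{V}$ is $(B_w(\mathcal{V}))_{w}$. *)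

theory Defs
  imports Main "HOL-Library.Cardinality"
begin

text \<open>Coordinates of F_q^(q+1) are indexed by 'a option: Some t corresponds to the
column (1,t,t^2,t^3), None to the column (0,0,0,1).\<close>

definition hweight :: "('i::finite \<Rightarrow> 'a::zero) \<Rightarrow> nat" where
  "hweight x = card {i. x i \<noteq> 0}"

definition pcm :: "nat \<Rightarrow> 'a option \<Rightarrow> 'a::field" where
  "pcm j i = (case i of Some t \<Rightarrow> t ^ j | None \<Rightarrow> (if j = 3 then 1 else 0))"

definition Ccode :: "('a::{finite,field} option \<Rightarrow> 'a) set" where
  "Ccode = {c. \<forall>j<4. (\<Sum>i\<in>UNIV. pcm j i * c i) = 0}"

definition coset :: "('a::{finite,field} option \<Rightarrow> 'a) \<Rightarrow> ('a option \<Rightarrow> 'a) set" where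
  "coset v = (\<lambda>c. (\<lambda>i. v i + c i)) ` Ccode"

definition coset_weight :: "('i::finite \<Rightarrow> 'a::zero) set \<Rightarrow> nat" where
  "coset_weight V = Min (hweight ` V)"

definition Bw :: "nat \<Rightarrow> ('i::finite \<Rightarrow> 'a::zero) set \<Rightarrow> nat" where
  "Bw w V = card {x\<in>V. hweight x = w}"

end

theory Submission
  imports Defs "HOL-Computational_Algebra.Polynomial" "HOL-Library.FuncSet"
begin

definition syn :: "('a::{finite,field} option \<Rightarrow> 'a) \<Rightarrow> nat \<Rightarrow> 'a" where
  "syn x j = (\<Sum>i\<in>UNIV. pcm j i * x i)"

lemma sum_option_split:
  fixes f :: "'a::finite option \<Rightarrow> 'b::comm_monoid_add"
  shows "(\<Sum>i\<in>UNIV. f i) = f None + (\<Sum>t\<in>UNIV. f (Some t))"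
proof -
  have "(\<Sum>i\<in>UNIV. f i) = (\<Sum>i\<in>insert None (range Some). f i)"
    by (simp only: UNIV_option_conv[symmetric])
  also have "\<dots> = f None + (\<Sum>i\<in>range Some. f i)"
    by (subst sum.insert) auto
  also have "(\<Sum>i\<in>range Some. f i) = (\<Sum>t\<in>UNIV. f (Some t))"
    by (subst sum.reindex) (auto simp: inj_on_def)
  finally show ?thesis .
qed

lemma syn_lin:
  "syn (\<lambda>i. x i - y i + z i) j = syn x j - syn y j + syn z j"
  unfolding syn_def by (simp add: algebra_simps sum.distrib sum_subtractf)

lemma syn_add:
  "syn (\<lambda>i. x i + y i) j = syn x j + syn y j"
  unfolding syn_def by (simp add: algebra_simps sum.distrib)

lemma Ccode_syn: "Ccode = {c. \<forall>j<4. syn c j = 0}"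
  unfolding Ccode_def syn_def by simp

lemma coset_syn: "coset v = {x. \<forall>j<4. syn x j = syn v j}"
proof (intro set_eqI iffI)
  fix x assume "x \<in> coset v"
  then obtain c where c: "c \<in> Ccode" "x = (\<lambda>i. v i + c i)" unfolding coset_def by auto
  then show "x \<in> {x. \<forall>j<4. syn x j = syn v j}"
    by (simp add: syn_add Ccode_syn)
next
  fix x assume x: "x \<in> {x. \<forall>j<4. syn x j = syn v j}"
  let ?c = "\<lambda>i. x i - v i"
  have "syn ?c j = syn x j - syn v j" for j
    using syn_lin[of x v "\<lambda>_. 0"] by (simp add: syn_def)
  then have "?c \<in> Ccode" using x by (simp add: Ccode_syn)
  then show "x \<in> coset v" unfolding coset_def
    by (intro image_eqI[of _ _ ?c]) simp_all
qed

lemma poly_lt4: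
  fixes p :: "'a::field poly"
  assumes "degree p < 4"
  shows "poly p t = (\<Sum>k<4. coeff p k * t ^ k)"
proof -
  have "poly p t = (\<Sum>k\<le>degree p. coeff p k * t ^ k)" by (rule poly_altdef)
  also have "\<dots> = (\<Sum>k<4. coeff p k * t ^ k)"
    by (rule sum.mono_neutral_left) (use assms in \<open>auto simp: coeff_eq_0\<close>)
  finally show ?thesis .
qed

lemma small_support_zero:
  fixes c :: "'a::{finite,field} option \<Rightarrow> 'a"
  assumes syn0: "\<forall>j<4. syn c j = 0" and card: "card {i. c i \<noteq> 0} \<le> 4"
  shows "c = (\<lambda>_. 0)"
proof -
  define P where "P = {t. c (Some t) \<noteq> 0}"
  have sub: "Some ` P \<subseteq> {i. c i \<noteq> 0}" by (auto simp: P_def)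
  have cP1: "card (Some ` P) = card P" by (simp add: card_image)
  have P4: "card P \<le> 4"
    using card_mono[OF _ sub] cP1 card by simp
  have P3: "card P \<le> 3" if "c None \<noteq> 0"
  proof -
    have sub2: "insert None (Some ` P) \<subseteq> {i. c i \<noteq> 0}" using sub that by auto
    have "card (insert None (Some ` P)) = Suc (card P)"
      using cP1 by (subst card_insert_disjoint) auto
    then show ?thesis using card_mono[OF _ sub2] card by simp
  qed
  have Pempty: "P = {}"
  proof (rule ccontr)
    assume "P \<noteq> {}"
    then obtain t0 where t0: "t0 \<in> P" by auto
    define p where "p = (\<Prod>u\<in>P - {t0}. [:-u, 1:])"
    have degp: "degree p \<le> card (P - {t0})"
      unfolding p_def using degree_prod_sum_le[of "P - {t0}" "\<lambda>u. [:-u, 1:]"] by simp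
    have cP: "card (P - {t0}) = card P - 1" using t0 by simp
    have Ppos: "card P > 0" using t0 by (auto simp: card_gt_0_iff)
    have deg4: "degree p < 4" using degp cP P4 Ppos by linarith
    have c3: "coeff p 3 * c None = 0"
    proof (cases "c None = 0")
      case False
      then have "card P \<le> 3" using P3 by simp
      then have "degree p < 3" using degp cP Ppos by linarith
      then show ?thesis by (simp add: coeff_eq_0)
    qed simp
    have "0 = (\<Sum>k<4. coeff p k * syn c k)" using syn0 by simp
    also have "\<dots> = (\<Sum>k<4. coeff p k * (c None * pcm k None + (\<Sum>t\<in>UNIV. t ^ k * c (Some t))))"
      unfolding syn_def by (subst sum_option_split) (simp add: pcm_def mult.commute)
    also have "\<dots> = (\<Sum>k<4. coeff p k * c None * pcm k None)
        + (\<Sum>k<4. \<Sum>t\<in>UNIV. c (Some t) * (coeff p k * t ^ k))"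
      by (simp add: distrib_left sum.distrib sum_distrib_left mult_ac)
    also have "(\<Sum>k<4. coeff p k * c None * pcm k None) = coeff p 3 * c None"
      by (simp add: pcm_def eval_nat_numeral lessThan_Suc)
    also have "(\<Sum>k<4. \<Sum>t\<in>UNIV. c (Some t) * (coeff p k * t ^ k))
        = (\<Sum>t\<in>UNIV. c (Some t) * (\<Sum>k<4. coeff p k * t ^ k))"
      by (simp add: sum_distrib_left sum.swap[of _ "{..<4::nat}" UNIV])
    also have "\<dots> = (\<Sum>t\<in>UNIV. c (Some t) * poly p t)"
      using c3 deg4 by (simp add: poly_lt4)
    also have "\<dots> = (\<Sum>t\<in>{t0}. c (Some t) * poly p t)"
      by (rule sum.mono_neutral_right) (auto simp: p_def poly_prod P_def)
    also have "\<dots> = c (Some t0) * poly p t0" by simp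
    finally have "c (Some t0) * poly p t0 = 0" using c3 by simp
    moreover have "poly p t0 \<noteq> 0" by (auto simp: p_def poly_prod P_def)
    ultimately show False using t0 by (simp add: P_def)
  qed
  have "syn c 3 = c None"
    unfolding syn_def using Pempty by (subst sum_option_split) (simp add: pcm_def P_def)
  then have "c None = 0" using syn0 by simp
  then show ?thesis using Pempty by (auto simp: P_def fun_eq_iff) (metis option.exhaust)
qed


lemma zero_outside_card:
  fixes A :: "'i set"
  assumes "finite A"
  shows "finite {f :: 'i \<Rightarrow> 'b::{finite,zero}. \<forall>i. i \<notin> A \<longrightarrow> f i = 0}
    \<and> card {f :: 'i \<Rightarrow> 'b. \<forall>i. i \<notin> A \<longrightarrow> f i = 0} = CARD('b) ^ card A"
proof -
  let ?S = "{f :: 'i \<Rightarrow> 'b. \<forall>i. i \<notin> A \<longrightarrow> f i = 0}"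
  have bij: "bij_betw (\<lambda>f. restrict f A) ?S (A \<rightarrow>\<^sub>E (UNIV :: 'b set))"
  proof (rule bij_betw_byWitness[where f' = "\<lambda>g i. if i \<in> A then g i else 0"])
    show "\<forall>a\<in>?S. (\<lambda>i. if i \<in> A then restrict a A i else 0) = a" by (auto simp: fun_eq_iff)
    show "\<forall>a'\<in>A \<rightarrow>\<^sub>E UNIV. restrict (\<lambda>i. if i \<in> A then a' i else 0) A = a'"
      by (auto simp: fun_eq_iff PiE_def extensional_def)
    show "(\<lambda>f. restrict f A) ` ?S \<subseteq> A \<rightarrow>\<^sub>E UNIV" by auto
    show "(\<lambda>g i. if i \<in> A then g i else 0) ` (A \<rightarrow>\<^sub>E UNIV) \<subseteq> ?S" by auto
  qed
  have fin: "finite (A \<rightarrow>\<^sub>E (UNIV :: 'b set))" using assms by (simp add: finite_PiE)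
  have "card (A \<rightarrow>\<^sub>E (UNIV :: 'b set)) = CARD('b) ^ card A"
    using assms by (simp add: card_funcsetE)
  moreover have "finite ?S" using bij_betw_finite[OF bij] fin by simp
  moreover have "card ?S = card (A \<rightarrow>\<^sub>E (UNIV :: 'b set))" by (rule bij_betw_same_card[OF bij])
  ultimately show ?thesis by simp
qed

lemma exists_on_F:
  fixes F :: "'a::{finite,field} option set" and s :: "nat \<Rightarrow> 'a"
  assumes "card F = 4"
  shows "\<exists>z. (\<forall>i. i \<notin> F \<longrightarrow> z i = 0) \<and> (\<forall>j<4. syn z j = s j)"
proof -
  let ?Z = "{z :: 'a option \<Rightarrow> 'a. \<forall>i. i \<notin> F \<longrightarrow> z i = 0}"
  let ?Y = "{f :: nat \<Rightarrow> 'a. \<forall>i. i \<notin> {..<4} \<longrightarrow> f i = 0}"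
  let ?Phi = "\<lambda>z j. if j < 4 then syn z j else 0"
  have Z: "finite ?Z" "card ?Z = CARD('a) ^ 4"
    using zero_outside_card[of F] assms by auto
  have Y: "finite ?Y" "card ?Y = CARD('a) ^ 4"
    using zero_outside_card[of "{..<4::nat}", where 'b='a] by auto
  have inj: "inj_on ?Phi ?Z"
  proof (rule inj_onI)
    fix z z' assume z: "z \<in> ?Z" and z': "z' \<in> ?Z" and eq: "?Phi z = ?Phi z'"
    let ?c = "\<lambda>i. z i - z' i + 0"
    have "syn ?c j = 0" if "j < 4" for j
    proof -
      have "syn ?c j = syn z j - syn z' j + syn (\<lambda>_. 0) j" by (rule syn_lin)
      moreover have "syn z j = syn z' j" using fun_cong[OF eq, of j] that by simp
      ultimately show ?thesis by (simp add: syn_def)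
    qed
    moreover have "card {i. ?c i \<noteq> 0} \<le> 4"
    proof -
      have "{i. ?c i \<noteq> 0} \<subseteq> F" using z z' by (auto, metis)
      then show ?thesis using assms card_mono[of F] by fastforce
    qed
    ultimately have "?c = (\<lambda>_. 0)" by (intro small_support_zero) auto
    then show "z = z'" by (auto simp: fun_eq_iff dest: fun_cong)
  qed
  have sub: "?Phi ` ?Z \<subseteq> ?Y" by auto
  have "card (?Phi ` ?Z) = card ?Y" using card_image[OF inj] Z Y by simp
  then have eqY: "?Phi ` ?Z = ?Y" using card_subset_eq[OF Y(1) sub] by simp
  have "(\<lambda>j. if j < 4 then s j else 0) \<in> ?Y" by auto
  then obtain z where "z \<in> ?Z" "?Phi z = (\<lambda>j. if j < 4 then s j else 0)"
    unfolding eqY[symmetric] by auto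
  then show ?thesis by (intro exI[of _ z]) (auto, metis)
qed

lemma N_eq:
  fixes va vb :: "'a::{finite,field} option \<Rightarrow> 'a" and T :: "'a option set"
  assumes "card T \<ge> 4"
  shows "card {x \<in> coset va. \<forall>i. i \<notin> T \<longrightarrow> x i = 0}
       = card {x \<in> coset vb. \<forall>i. i \<notin> T \<longrightarrow> x i = 0}"
proof -
  obtain F where F: "F \<subseteq> T" "card F = 4"
    using assms obtain_subset_with_card_n by metis
  obtain za where za: "\<forall>i. i \<notin> F \<longrightarrow> za i = 0" "\<forall>j<4. syn za j = syn va j"
    using exists_on_F[OF F(2)] by blast
  obtain zb where zb: "\<forall>i. i \<notin> F \<longrightarrow> zb i = 0" "\<forall>j<4. syn zb j = syn vb j"
    using exists_on_F[OF F(2)] by blast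
  let ?A = "{x \<in> coset va. \<forall>i. i \<notin> T \<longrightarrow> x i = 0}"
  let ?B = "{x \<in> coset vb. \<forall>i. i \<notin> T \<longrightarrow> x i = 0}"
  let ?f = "\<lambda>x i. x i - za i + zb i"
  have inj: "inj_on ?f ?A" by (rule inj_onI) (auto simp: fun_eq_iff)
  have img: "?f ` ?A = ?B"
  proof (intro set_eqI iffI)
    fix y assume "y \<in> ?f ` ?A"
    then obtain x where x: "x \<in> ?A" "y = ?f x" by auto
    then show "y \<in> ?B" using za zb F(1) by (auto simp: coset_syn syn_lin subset_iff, metis)
  next
    fix y assume y: "y \<in> ?B"
    let ?x = "\<lambda>i. y i - zb i + za i"
    show "y \<in> ?f ` ?A"
    proof (rule image_eqI)
      show "y = ?f ?x" by simp
      show "?x \<in> ?A" using y za zb F(1) by (auto simp: coset_syn syn_lin subset_iff, metis)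
    qed
  qed
  show ?thesis using card_image[OF inj] img by simp
qed


lemma supersets_card:
  fixes S :: "'i::finite set"
  shows "card {T. card T = m \<and> S \<subseteq> T}
     = (if card S \<le> m then (CARD('i) - card S) choose (m - card S) else 0)"
proof (cases "card S \<le> m")
  case False
  then have "{T. card T = m \<and> S \<subseteq> T} = {}"
    using card_mono[of _ S] by fastforce
  then show ?thesis using False by simp
next
  case True
  have bij: "bij_betw (\<lambda>T. T - S) {T. card T = m \<and> S \<subseteq> T} {U. U \<subseteq> - S \<and> card U = m - card S}"
  proof (rule bij_betw_byWitness[where f' = "\<lambda>U. U \<union> S"])
    show "\<forall>a\<in>{T. card T = m \<and> S \<subseteq> T}. a - S \<union> S = a" by auto
    show "\<forall>a'\<in>{U. U \<subseteq> - S \<and> card U = m - card S}. a' \<union> S - S = a'" by auto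
    show "(\<lambda>T. T - S) ` {T. card T = m \<and> S \<subseteq> T} \<subseteq> {U. U \<subseteq> - S \<and> card U = m - card S}"
      by (auto simp: card_Diff_subset)
    show "(\<lambda>U. U \<union> S) ` {U. U \<subseteq> - S \<and> card U = m - card S} \<subseteq> {T. card T = m \<and> S \<subseteq> T}"
    proof clarsimp
      fix U assume "U \<subseteq> - S" "card U = m - card S"
      then have "card (U \<union> S) = card U + card S"
        by (intro card_Un_disjoint) auto
      then show "card (U \<union> S) = m" using \<open>card U = m - card S\<close> True by simp
    qed
  qed
  have "card (- S) = CARD('i) - card S"
    by (simp add: Compl_eq_Diff_UNIV card_Diff_subset)
  then show ?thesis using bij_betw_same_card[OF bij] n_subsets[of "- S" "m - card S"] True by simp
qed

lemma double_count:
  fixes V :: "('i::finite \<Rightarrow> 'a::{finite,zero}) set"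
  shows "(\<Sum>T\<in>{T. card T = m}. card {x\<in>V. \<forall>i. i \<notin> T \<longrightarrow> x i = 0})
    = (\<Sum>k\<le>m. Bw k V * ((CARD('i) - k) choose (m - k)))"
proof -
  define g where "g k = (if k \<le> m then (CARD('i) - k) choose (m - k) else 0)" for k
  have "(\<Sum>T\<in>{T. card T = m}. card {x\<in>V. \<forall>i. i \<notin> T \<longrightarrow> x i = 0})
      = (\<Sum>T\<in>{T. card T = m}. \<Sum>x\<in>V. of_bool ({i. x i \<noteq> 0} \<subseteq> T))"
    by (intro sum.cong refl, simp add: sum_of_bool_eq Int_def, rule arg_cong[where f=card]) auto
  also have "\<dots> = (\<Sum>x\<in>V. \<Sum>T\<in>{T. card T = m}. of_bool ({i. x i \<noteq> 0} \<subseteq> T))"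
    by (rule sum.swap)
  also have "\<dots> = (\<Sum>x\<in>V. g (hweight x))"
  proof (intro sum.cong refl)
    fix x :: "'i \<Rightarrow> 'a"
    have "(\<Sum>T\<in>{T. card T = m}. of_bool ({i. x i \<noteq> 0} \<subseteq> T)) 
        = card {T. card T = m \<and> {i. x i \<noteq> 0} \<subseteq> T}"
      by (subst sum_of_bool_eq) (auto simp: Int_def)
    also have "\<dots> = g (hweight x)"
      unfolding supersets_card g_def hweight_def by simp
    finally show "(\<Sum>T\<in>{T. card T = m}. of_bool ({i. x i \<noteq> 0} \<subseteq> T)) = g (hweight x)" .
  qed
  also have "\<dots> = (\<Sum>k\<in>{..m + CARD('i)}. \<Sum>x\<in>{x \<in> V. hweight x = k}. g (hweight x))"
  proof (rule sum.group[symmetric])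
    show "hweight ` V \<subseteq> {..m + CARD('i)}"
      by (auto simp: hweight_def intro!: trans_le_add2 card_mono)
  qed auto
  also have "\<dots> = (\<Sum>k\<in>{..m + CARD('i)}. Bw k V * g k)"
    by (intro sum.cong refl) (simp add: Bw_def)
  also have "\<dots> = (\<Sum>k\<le>m. Bw k V * g k)"
    by (rule sum.mono_neutral_right) (auto simp: g_def)
  also have "\<dots> = (\<Sum>k\<le>m. Bw k V * ((CARD('i) - k) choose (m - k)))"
    by (intro sum.cong refl) (simp add: g_def)
  finally show ?thesis .
qed


lemma alt_partial:
  assumes "M \<ge> 1"
  shows "(\<Sum>j<M. (-1) ^ j * int (M choose j)) = - ((-1) ^ M)"
proof -
  have "(\<Sum>j\<le>M. (-1) ^ j * int (M choose j)) = 0"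
    using choose_alternating_sum[of M] assms by simp
  moreover have "(\<Sum>j\<le>M. (-1) ^ j * int (M choose j)) = (\<Sum>j<M. (-1) ^ j * int (M choose j)) + (-1) ^ M"
    by (simp add: lessThan_Suc_atMost[symmetric])
  ultimately show ?thesis by simp
qed

lemma alg_rec:
  fixes e :: "nat \<Rightarrow> int"
  assumes hyp: "\<And>M. 1 \<le> M \<Longrightarrow> M \<le> N \<Longrightarrow> (\<Sum>j\<le>M. e j * int ((N - j) choose (M - j))) = 0"
  shows "M \<le> N \<Longrightarrow> e M = (-1) ^ M * int (N choose M) * e 0"
proof (induction M rule: less_induct)
  case (less M)
  show ?case
  proof (cases "M = 0")
    case True then show ?thesis by simp
  next
    case False
    then have M1: "1 \<le> M" by simp
    have "(\<Sum>j<M. e j * int ((N - j) choose (M - j)))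
        = (\<Sum>j<M. e 0 * int (N choose M) * ((-1) ^ j * int (M choose j)))"
    proof (intro sum.cong refl)
      fix j assume j: "j \<in> {..<M}"
      then have "e j = (-1) ^ j * int (N choose j) * e 0" using less.IH[of j] less.prems by simp
      moreover have "(N choose M) * (M choose j) = (N choose j) * ((N - j) choose (M - j))"
        using j less.prems by (intro choose_mult) auto
      then have "int (N choose j) * int ((N - j) choose (M - j)) = int (N choose M) * int (M choose j)"
        by (metis of_nat_mult)
      ultimately show "e j * int ((N - j) choose (M - j)) = e 0 * int (N choose M) * ((-1) ^ j * int (M choose j))"
        by (simp add: algebra_simps)
    qed
    also have "\<dots> = e 0 * int (N choose M) * (\<Sum>j<M. (-1) ^ j * int (M choose j))"
      by (simp add: sum_distrib_left)
    also have "\<dots> = - (e 0 * int (N choose M) * (-1) ^ M)"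
      using alt_partial[OF M1] by simp
    finally have A: "(\<Sum>j<M. e j * int ((N - j) choose (M - j))) = - (e 0 * int (N choose M) * (-1) ^ M)" .
    have "(\<Sum>j\<le>M. e j * int ((N - j) choose (M - j))) = (\<Sum>j<M. e j * int ((N - j) choose (M - j))) + e M"
      by (simp add: lessThan_Suc_atMost[symmetric])
    then have "0 = - (e 0 * int (N choose M) * (-1) ^ M) + e M"
      using hyp[OF M1 less.prems] A by simp
    then show ?thesis by (simp add: algebra_simps)
  qed
qed

lemma sum_shift3:
  fixes f :: "nat \<Rightarrow> int"
  shows "(\<Sum>k\<le>M + 3. f k) = f 0 + f 1 + f 2 + (\<Sum>j\<le>M. f (j + 3))"
  by (induction M) (simp_all add: numeral_eq_Suc)

lemma low_weights:
  fixes v :: "'a::{finite,field} option \<Rightarrow> 'a"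
  assumes cw: "coset_weight (coset v) = W" and W: "W \<in> {2, 3}"
  shows "Bw 0 (coset v) = 0" "Bw 1 (coset v) = 0" "Bw 2 (coset v) = (if W = 2 then 1 else 0)"
proof -
  let ?V = "coset v"
  have fin: "finite (hweight ` ?V)" by simp
  have vV: "v \<in> ?V" by (simp add: coset_syn)
  have ge: "hweight x \<ge> W" if "x \<in> ?V" for x
    using Min_le[OF fin] that cw unfolding coset_weight_def by auto
  have empty: "{x \<in> ?V. hweight x = k} = {}" if "k < W" for k
    using ge that by fastforce
  show "Bw 0 ?V = 0" "Bw 1 ?V = 0" unfolding Bw_def using empty[of 0] empty[of 1] W by auto
  show "Bw 2 ?V = (if W = 2 then 1 else 0)"
  proof (cases "W = 2")
    case False
    then show ?thesis unfolding Bw_def using empty W by auto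
  next
    case True
    have "Min (hweight ` ?V) \<in> hweight ` ?V" using fin vV by (intro Min_in) auto
    then obtain x0 where x0: "x0 \<in> ?V" "hweight x0 = 2" using cw True unfolding coset_weight_def by auto
    have "{x \<in> ?V. hweight x = 2} = {x0}"
    proof (intro set_eqI iffI)
      fix x assume "x \<in> {x \<in> ?V. hweight x = 2}"
      then have x: "x \<in> ?V" "hweight x = 2" by auto
      let ?c = "\<lambda>i. x i - x0 i + 0"
      have "\<forall>j<4. syn ?c j = 0"
      proof (intro allI impI)
        fix j :: nat assume j: "j < 4"
        have "syn ?c j = syn x j - syn x0 j + syn (\<lambda>_. 0) j" by (rule syn_lin)
        moreover have "syn x j = syn x0 j" using x x0 j by (simp add: coset_syn)
        ultimately show "syn ?c j = 0" by (simp add: syn_def)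
      qed
      moreover have "card {i. ?c i \<noteq> 0} \<le> 4"
      proof -
        have "{i. ?c i \<noteq> 0} \<subseteq> {i. x i \<noteq> 0} \<union> {i. x0 i \<noteq> 0}" by auto
        then have "card {i. ?c i \<noteq> 0} \<le> card ({i. x i \<noteq> 0} \<union> {i. x0 i \<noteq> 0})"
          by (intro card_mono) auto
        also have "\<dots> \<le> card {i. x i \<noteq> 0} + card {i. x0 i \<noteq> 0}" by (rule card_Un_le)
        finally show ?thesis using x x0 unfolding hweight_def by simp
      qed
      ultimately have "?c = (\<lambda>_. 0)" by (rule small_support_zero)
      then show "x \<in> {x0}" by (auto simp: fun_eq_iff)
    qed (use x0 in auto)
    then show ?thesis unfolding Bw_def using True by simp
  qed
qed


theorem theorem5p1:
  fixes va vb :: "'a::{finite,field} option \<Rightarrow> 'a" and W w :: nat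
  assumes "CARD('a) \<ge> 5"
    and "W \<in> {2, 3}"
    and "coset_weight (coset va) = W" and "coset_weight (coset vb) = W"
    and "(\<lambda>k. Bw k (coset va)) \<noteq> (\<lambda>k. Bw k (coset vb))"
    and "4 \<le> w" and "w \<le> CARD('a) + 1"
  shows "int (Bw w (coset va)) - int (Bw w (coset vb))
       = - ((-1) ^ w) * (int (Bw 3 (coset va)) - int (Bw 3 (coset vb)))
         * int ((CARD('a) - 2) choose (w - 3))"
proof -
  let ?n = "CARD('a option)"
  have n: "?n = CARD('a) + 1" by (simp add: card_option)
  define d where "d k = int (Bw k (coset va)) - int (Bw k (coset vb))" for k
  have key: "(\<Sum>k\<le>m. d k * int ((?n - k) choose (m - k))) = 0" if m4: "m \<ge> 4" for m
  proof -
    have "(\<Sum>T\<in>{T. card T = m}. card {x\<in>coset va. \<forall>i. i \<notin> T \<longrightarrow> x i = 0})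
        = (\<Sum>T\<in>{T. card T = m}. card {x\<in>coset vb. \<forall>i. i \<notin> T \<longrightarrow> x i = 0})"
      by (rule sum.cong[OF refl]) (rule N_eq, use m4 in simp)
    then have "(\<Sum>k\<le>m. Bw k (coset va) * ((?n - k) choose (m - k)))
        = (\<Sum>k\<le>m. Bw k (coset vb) * ((?n - k) choose (m - k)))"
      by (simp only: double_count)
    then have "int (\<Sum>k\<le>m. Bw k (coset va) * ((?n - k) choose (m - k)))
        = int (\<Sum>k\<le>m. Bw k (coset vb) * ((?n - k) choose (m - k)))" by simp
    then have "(\<Sum>k\<le>m. int (Bw k (coset va)) * int ((?n - k) choose (m - k)))
        = (\<Sum>k\<le>m. int (Bw k (coset vb)) * int ((?n - k) choose (m - k)))"
      by (simp only: of_nat_sum of_nat_mult)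
    then show ?thesis by (simp add: d_def left_diff_distrib sum_subtractf)
  qed
  have lowa: "Bw 0 (coset va) = 0" "Bw 1 (coset va) = 0" "Bw 2 (coset va) = (if W = 2 then 1 else 0)"
    using low_weights[OF assms(3) assms(2)] by auto
  have lowb: "Bw 0 (coset vb) = 0" "Bw 1 (coset vb) = 0" "Bw 2 (coset vb) = (if W = 2 then 1 else 0)"
    using low_weights[OF assms(4) assms(2)] by auto
  have d012: "d 0 = 0" "d 1 = 0" "d 2 = 0" unfolding d_def using lowa lowb by auto
  define e where "e j = d (j + 3)" for j
  have hyp: "(\<Sum>j\<le>M. e j * int ((?n - 3 - j) choose (M - j))) = 0"
    if "1 \<le> M" "M \<le> ?n - 3" for M
  proof -
    have "0 = (\<Sum>k\<le>M + 3. d k * int ((?n - k) choose (M + 3 - k)))"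
      using key[of "M + 3"] that by simp
    also have "\<dots> = (\<Sum>j\<le>M. d (j + 3) * int ((?n - (j + 3)) choose (M + 3 - (j + 3))))"
      by (subst sum_shift3) (simp add: d012 d012[simplified])
    also have "\<dots> = (\<Sum>j\<le>M. e j * int ((?n - 3 - j) choose (M - j)))"
      by (intro sum.cong refl) (simp add: e_def diff_diff_left add.commute)
    finally show ?thesis by simp
  qed
  have wle: "w - 3 \<le> ?n - 3" using assms(7) n by simp
  have "e (w - 3) = (-1) ^ (w - 3) * int ((?n - 3) choose (w - 3)) * e 0"
    by (rule alg_rec[OF hyp wle]) auto
  moreover have "e (w - 3) = d w" using assms(6) by (simp add: e_def)
  moreover have "e 0 = d 3" by (simp add: e_def)
  moreover have "?n - 3 = CARD('a) - 2" using n by simp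
  moreover have "(-1::int) ^ w = - ((-1) ^ (w - 3))"
  proof -
    have "(-1::int) ^ w = (-1) ^ (w - 3 + 3)" using assms(6) by simp
    also have "\<dots> = - ((-1) ^ (w - 3))" by (simp only: power_add) simp
    finally show ?thesis .
  qed
  ultimately show ?thesis unfolding d_def by simp
qed

end
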